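(* Let $m\ge0$ be an integer. Let $\varphi\in C^\infty(T\mathbb{S}^{n-1}\setminus\mathbb{S}^{n-1}_0)$ satisfy $$E_{m+1}E_m\cdots E_1\varphi=0$$ for all indices $1\le i_1,j_1,\dots,i_{m+1},j_{m+1}\le n$, where $$E_k=x_{i_k}\Xi_{j_k}-x_{j_k}\Xi_{i_k}+(m-k+1)\big(x_{i_k}\xi_{j_k}-x_{j_k}\xi_{i_k}\big)\quad(k=1,\dots,m+1)$$ (so $E_1$ is applied first and $E_{m+1}$ last). Define $\psi\in C^\infty(V_n)$ by $$\psi(x,\xi)=|\xi|^m\varphi\big(x,\xi/|\xi|\big).$$ Then, for all indices $1\le i_1,j_1,\dots,i_{m+1},j_{m+1}\le n$, $$\Big(x_{i_1}\frac{\partial}{\partial\xi^{j_1}}-x_{j_1}\frac{\partial}{\partial\xi^{i_1}}\Big)\cdots\Big(x_{i_{m+1}}\frac{\partial}{\partial\xi^{j_{m+1}}}-x_{j_{m+1}}\frac{\partial}{\partial\xi^{i_{m+1}}}\Big)\psi=0$$ on $V_n$.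
   Context: $T\mathbb{S}^{n-1}=\{(x,\xi):|\xi|=1,\ \langle x,\xi\rangle=0\}$ and $\mathbb{S}^{n-1}_0=\{(0,\xi):\xi\in\mathbb{S}^{n-1}\}\subset T\mathbb{S}^{n-1}$. Let $$V_n=\{(x,\xi)\in\mathbb{R}^n\times\mathbb{R}^n: x\ne0,\ \xi\ne0,\ \langle x,\xi\rangle=0\},$$ a smooth hypersurface of $(\mathbb{R}^n\setminus\{0\})^2$. The vector fields $x_i\partial/\partial\xi^j-x_j\partial/\partial\xi^i$ are tangent to $V_n$, hence act on $C^\infty(V_n)$. On $\mathbb{R}^n\times\mathbb{R}^n$ define (summation over $p$) $$\tilde\Xi_i=\partial/\partial\xi^i-x_i\xi^p\,\partial/\partial x^p-\xi_i\xi^p\,\partial/\partial\xi^p.$$ This field is tangent to $T\mathbb{S}^{n-1}$; $\Xi_i$ denotes its restriction to $T\mathbb{S}^{n-1}\setminus\mathbb{S}^{n-1}_0$. Here $x_i=x^i$ and $\xi_i=\xi^i$ act by multiplication. *)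

theory Defs
  imports "HOL-Analysis.Analysis"
begin

type_synonym 'n pt = "(real^'n) \<times> (real^'n)"

fun dderiv :: "('a::real_normed_vector \<Rightarrow> real) \<Rightarrow> 'a list \<Rightarrow> 'a \<Rightarrow> real" where
  "dderiv f [] = f"
| "dderiv f (v # vs) = (\<lambda>p. frechet_derivative (dderiv f vs) (at p) v)"

definition smooth_on_open :: "'a::real_normed_vector set \<Rightarrow> ('a \<Rightarrow> real) \<Rightarrow> bool" where
  "smooth_on_open U f \<longleftrightarrow> open U \<and> (\<forall>vs. \<forall>p\<in>U. dderiv f vs differentiable (at p))"

definition smooth_on_sub :: "'a::real_normed_vector set \<Rightarrow> ('a \<Rightarrow> real) \<Rightarrow> bool" where
  "smooth_on_sub S f \<longleftrightarrow>
     (\<forall>p\<in>S. \<exists>U g. open U \<and> p \<in> U \<and> smooth_on_open U g \<and> (\<forall>q\<in>S \<inter> U. f q = g q))"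

definition vf_act :: "'a::real_normed_vector set \<Rightarrow> ('a \<Rightarrow> 'a) \<Rightarrow> ('a \<Rightarrow> real) \<Rightarrow> 'a \<Rightarrow> real" where
  "vf_act S X f = (\<lambda>p. frechet_derivative f (at p within S) (X p))"

definition TS :: "'n::finite pt set" where
  "TS = {(x, \<xi>). norm \<xi> = 1 \<and> inner x \<xi> = 0}"

definition S0 :: "'n::finite pt set" where
  "S0 = {(x, \<xi>). x = 0 \<and> norm \<xi> = 1}"

definition Vn :: "'n::finite pt set" where
  "Vn = {(x, \<xi>). x \<noteq> 0 \<and> \<xi> \<noteq> 0 \<and> inner x \<xi> = 0}"

text \<open>The vector field Xi-tilde_i = d/dxi^i - x_i xi^p d/dx^p - xi_i xi^p d/dxi^p.\<close>
definition Xi :: "'n::finite \<Rightarrow> 'n pt \<Rightarrow> 'n pt" where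
  "Xi i = (\<lambda>(x, \<xi>). (- (x $ i) *\<^sub>R \<xi>, axis i 1 - (\<xi> $ i) *\<^sub>R \<xi>))"

definition Lf :: "'n::finite \<Rightarrow> 'n \<Rightarrow> 'n pt \<Rightarrow> 'n pt" where
  "Lf i j = (\<lambda>(x, \<xi>). (0, (x $ i) *\<^sub>R axis j 1 - (x $ j) *\<^sub>R axis i 1))"

definition Eop :: "real \<Rightarrow> 'n::finite \<Rightarrow> 'n \<Rightarrow> ('n pt \<Rightarrow> real) \<Rightarrow> 'n pt \<Rightarrow> real" where
  "Eop c i j f = (\<lambda>p. fst p $ i * vf_act (TS - S0) (Xi j) f p
                      - fst p $ j * vf_act (TS - S0) (Xi i) f p
                      + c * (fst p $ i * snd p $ j - fst p $ j * snd p $ i) * f p)"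

end

theory Submission
  imports Defs
begin

lemma dderiv_append: "dderiv (dderiv f [v]) ws = dderiv f (ws @ [v])"
  by (induction ws) auto

lemma fd_local:
  assumes "open U" "q \<in> U" "\<forall>y\<in>U. f y = g y"
  shows "frechet_derivative f (at q) = frechet_derivative g (at q)"
proof -
  have "\<And>D. (f has_derivative D) (at q) = (g has_derivative D) (at q)"
    using assms has_derivative_transform_within_open[of _ _ q UNIV U] by metis
  then show ?thesis unfolding frechet_derivative_def by simp
qed

lemma dderiv_local:
  assumes "open U" "\<forall>y\<in>U. f y = g y" "q \<in> U"
  shows "dderiv f vs q = dderiv g vs q"
  using assms(3)
proof (induction vs arbitrary: q)
  case Nil
  then show ?case using assms by simp
next
  case (Cons v vs)
  have "frechet_derivative (dderiv f vs) (at q) = frechet_derivative (dderiv g vs) (at q)"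
    using fd_local[OF assms(1) Cons.prems] Cons.IH by blast
  then show ?case by simp
qed

lemma diff_local:
  assumes "open U" "p \<in> U" "\<forall>y\<in>U. f y = g y" "f differentiable (at p)"
  shows "g differentiable (at p)"
  using assms has_derivative_transform_within_open[of f _ p UNIV U g]
  unfolding differentiable_def by metis

lemma smooth_diff: "smooth_on_open U f \<Longrightarrow> p \<in> U \<Longrightarrow> f differentiable (at p)"
  unfolding smooth_on_open_def by (metis dderiv.simps(1))

lemma smooth_dderiv: "smooth_on_open U f \<Longrightarrow> smooth_on_open U (dderiv f [v])"
  unfolding smooth_on_open_def by (metis dderiv_append)

lemma smooth_coind:
  assumes U: "open U"
    and D: "\<And>f. P f \<Longrightarrow> \<forall>p\<in>U. f differentiable (at p)"
    and S: "\<And>f v. P f \<Longrightarrow> \<exists>g. P g \<and> (\<forall>q\<in>U. dderiv f [v] q = g q)"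
    and Pf: "P f"
  shows "smooth_on_open U f"
proof -
  have "\<forall>f. P f \<longrightarrow> (\<forall>p\<in>U. dderiv f vs differentiable (at p))" for vs
  proof (induction vs rule: rev_induct)
    case Nil
    then show ?case using D by simp
  next
    case (snoc v ws)
    show ?case
    proof (intro allI impI ballI)
      fix f p assume "P f" "p \<in> U"
      obtain g where g: "P g" "\<forall>q\<in>U. dderiv f [v] q = g q" using S[OF \<open>P f\<close>] by blast
      have "\<forall>q\<in>U. dderiv g ws q = dderiv f (ws @ [v]) q"
        using dderiv_local[OF U g(2)] dderiv_append by metis
      moreover have "dderiv g ws differentiable (at p)" using snoc g(1) \<open>p \<in> U\<close> by blast
      ultimately show "dderiv f (ws @ [v]) differentiable (at p)"
        using diff_local[OF U \<open>p \<in> U\<close>] by blast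
    qed
  qed
  then show ?thesis unfolding smooth_on_open_def using U Pf by blast
qed

lemma dderiv_const: "dderiv (\<lambda>_. c) vs = (\<lambda>_. if vs = [] then c else 0)"
  by (induction vs) auto

lemma smooth_const: "open U \<Longrightarrow> smooth_on_open U (\<lambda>_. c)"
  unfolding smooth_on_open_def dderiv_const by simp

lemma smooth_linear:
  assumes "open U" "bounded_linear f"
  shows "smooth_on_open U f"
  unfolding smooth_on_open_def
proof (intro conjI assms allI ballI)
  fix vs p
  show "dderiv f vs differentiable (at p)"
  proof (cases vs rule: rev_exhaust)
    case Nil
    then show ?thesis using assms(2) by (simp add: bounded_linear_imp_differentiable)
  next
    case (snoc ws v)
    have "dderiv f [v] = (\<lambda>_. f v)"
      using frechet_derivative_at[OF bounded_linear_imp_has_derivative[OF assms(2)]] by auto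
    then have "dderiv f vs = dderiv (\<lambda>_. f v) ws" using snoc dderiv_append by metis
    then show ?thesis unfolding dderiv_const by simp
  qed
qed


definition sp :: "(('a \<Rightarrow> real) \<times> ('a \<Rightarrow> real)) list \<Rightarrow> 'a \<Rightarrow> real" where
  "sp L q = (\<Sum>(f,g)\<leftarrow>L. f q * g q)"

lemma sp_deriv:
  assumes "\<forall>(f,g)\<in>set L. smooth_on_open U f \<and> smooth_on_open U g" "q \<in> U"
  shows "(sp L has_derivative (\<lambda>y. \<Sum>(f,g)\<leftarrow>L. f q * frechet_derivative g (at q) y
            + frechet_derivative f (at q) y * g q)) (at q)"
  using assms(1)
proof (induction L)
  case Nil
  then show ?case by (simp add: sp_def)
next
  case (Cons a L)
  obtain f g where a: "a = (f,g)" by force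
  have sf: "smooth_on_open U f" "smooth_on_open U g" using Cons.prems a by auto
  have df: "(f has_derivative frechet_derivative f (at q)) (at q)"
    using smooth_diff[OF sf(1) assms(2)] frechet_derivative_works by blast
  have dg: "(g has_derivative frechet_derivative g (at q)) (at q)"
    using smooth_diff[OF sf(2) assms(2)] frechet_derivative_works by blast
  have "((\<lambda>x. f x * g x + sp L x) has_derivative (\<lambda>y. (f q * frechet_derivative g (at q) y
            + frechet_derivative f (at q) y * g q) + (\<Sum>(f,g)\<leftarrow>L. f q * frechet_derivative g (at q) y
            + frechet_derivative f (at q) y * g q))) (at q)"
    by (intro has_derivative_add has_derivative_mult df dg Cons.IH) (use Cons.prems in auto)
  then show ?case by (simp add: a sp_def)
qed

lemma smooth_sp:
  assumes U: "open U" and L: "\<forall>(f,g)\<in>set L. smooth_on_open U f \<and> smooth_on_open U g"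
    and h: "\<forall>q\<in>U. h q = sp L q"
  shows "smooth_on_open U h"
proof -
  define P where "P h \<longleftrightarrow> (\<exists>L. (\<forall>(f,g)\<in>set L. smooth_on_open U f \<and> smooth_on_open U g)
      \<and> (\<forall>q\<in>U. h q = sp L q))" for h
  show ?thesis
  proof (rule smooth_coind[of U P])
    fix h assume "P h"
    then obtain L where L: "\<forall>(f,g)\<in>set L. smooth_on_open U f \<and> smooth_on_open U g"
      "\<forall>q\<in>U. h q = sp L q" unfolding P_def by blast
    show "\<forall>p\<in>U. h differentiable (at p)"
    proof
      fix p assume p: "p \<in> U"
      have "sp L differentiable (at p)" using sp_deriv[OF L(1) p] unfolding differentiable_def by blast
      then show "h differentiable (at p)" using diff_local[OF U p _ \<open>sp L differentiable (at p)\<close>] L(2) by simp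
    qed
  next
    fix h v assume "P h"
    then obtain L where L: "\<forall>(f,g)\<in>set L. smooth_on_open U f \<and> smooth_on_open U g"
      "\<forall>q\<in>U. h q = sp L q" unfolding P_def by blast
    define L' where "L' = map (\<lambda>(f,g). (f, dderiv g [v])) L @ map (\<lambda>(f,g). (dderiv f [v], g)) L"
    have L'1: "\<forall>(f,g)\<in>set L'. smooth_on_open U f \<and> smooth_on_open U g"
    proof
      fix x assume "x \<in> set L'"
      then obtain f g where fg: "(f,g) \<in> set L" "x = (f, dderiv g [v]) \<or> x = (dderiv f [v], g)"
        unfolding L'_def by auto
      have "smooth_on_open U f" "smooth_on_open U g" using L(1) fg(1) by auto
      then have "smooth_on_open U (dderiv f [v])" "smooth_on_open U (dderiv g [v])"
        using smooth_dderiv by blast+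
      then show "case x of (f,g) \<Rightarrow> smooth_on_open U f \<and> smooth_on_open U g"
        using fg(2) \<open>smooth_on_open U f\<close> \<open>smooth_on_open U g\<close> by (elim disjE) simp_all
    qed
    have "\<forall>q\<in>U. dderiv h [v] q = sp L' q"
    proof
      fix q assume q: "q \<in> U"
      have "dderiv h [v] q = frechet_derivative (sp L) (at q) v"
        using fd_local[OF U q L(2)] by simp
      also have "\<dots> = (\<Sum>(f,g)\<leftarrow>L. f q * frechet_derivative g (at q) v
            + frechet_derivative f (at q) v * g q)"
        by (simp only: frechet_derivative_at[OF sp_deriv[OF L(1) q], symmetric])
      also have "\<dots> = sp L' q"
        unfolding L'_def sp_def by (induction L) auto
      finally show "dderiv h [v] q = sp L' q" .
    qed
    then show "\<exists>g. P g \<and> (\<forall>q\<in>U. dderiv h [v] q = g q)"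
      unfolding P_def using L'1 by blast
  next
    show "P h" unfolding P_def using L h by blast
  qed (rule U)
qed

lemma smooth_open: "smooth_on_open U f \<Longrightarrow> open U"
  unfolding smooth_on_open_def by blast

lemma smooth_mult:
  "smooth_on_open U f \<Longrightarrow> smooth_on_open U g \<Longrightarrow> smooth_on_open U (\<lambda>q. f q * g q)"
  by (rule smooth_sp[of U "[(f,g)]"]) (auto simp: sp_def dest: smooth_open)

lemma smooth_add:
  "smooth_on_open U f \<Longrightarrow> smooth_on_open U g \<Longrightarrow> smooth_on_open U (\<lambda>q. f q + g q)"
  by (rule smooth_sp[of U "[(f,\<lambda>_. 1), (g, \<lambda>_. 1)]"])
     (auto simp: sp_def intro: smooth_const dest: smooth_open)

lemma smooth_cmult:
  "smooth_on_open U f \<Longrightarrow> smooth_on_open U (\<lambda>q. c * f q)"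
  by (rule smooth_mult[OF smooth_const[OF smooth_open]])

lemma smooth_minus:
  "smooth_on_open U f \<Longrightarrow> smooth_on_open U g \<Longrightarrow> smooth_on_open U (\<lambda>q. f q - g q)"
  using smooth_add[of U f "\<lambda>q. (-1) * g q"] smooth_cmult[of U g "-1"] by simp

lemma smooth_sum:
  "finite A \<Longrightarrow> open U \<Longrightarrow> (\<And>a. a \<in> A \<Longrightarrow> smooth_on_open U (F a)) \<Longrightarrow>
     smooth_on_open U (\<lambda>q. \<Sum>a\<in>A. F a q)"
  by (induction A rule: finite_induct) (auto intro: smooth_const smooth_add)


lemma deriv_unique_curve:
  fixes f :: "'a::real_normed_vector \<Rightarrow> real" and \<gamma> :: "real \<Rightarrow> 'a"
  assumes D1: "(f has_derivative D1) (at p within S)" and D2: "(f has_derivative D2) (at p within S)"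
    and T: "open T" "0 \<in> T" "\<gamma> ` T \<subseteq> S" "\<gamma> 0 = p"
    and g: "(\<gamma> has_derivative (\<lambda>t. t *\<^sub>R v)) (at 0)"
  shows "D1 v = D2 v"
proof -
  have g': "(\<gamma> has_derivative (\<lambda>t. t *\<^sub>R v)) (at 0 within T)"
    using g has_derivative_at_withinI by blast
  have "(f has_derivative D1) (at (\<gamma> 0) within \<gamma> ` T)"
    using has_derivative_subset[OF D1 T(3)] T(4) by simp
  from has_derivative_in_compose[OF g' this]
  have c1: "((\<lambda>t. f (\<gamma> t)) has_derivative (\<lambda>t. D1 (t *\<^sub>R v))) (at 0)"
    using at_within_open[OF T(2,1)] by simp
  have "(f has_derivative D2) (at (\<gamma> 0) within \<gamma> ` T)"
    using has_derivative_subset[OF D2 T(3)] T(4) by simp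
  from has_derivative_in_compose[OF g' this]
  have c2: "((\<lambda>t. f (\<gamma> t)) has_derivative (\<lambda>t. D2 (t *\<^sub>R v))) (at 0)"
    using at_within_open[OF T(2,1)] by simp
  have "(\<lambda>t. D1 (t *\<^sub>R v)) = (\<lambda>t. D2 (t *\<^sub>R v))" using has_derivative_unique[OF c1 c2] .
  then show ?thesis by (metis scaleR_one)
qed

lemma Vn_unique:
  fixes p :: "'n::finite pt" and f :: "'n pt \<Rightarrow> real"
  assumes p: "p \<in> Vn" and D1: "(f has_derivative D1) (at p within Vn)"
    and D2: "(f has_derivative D2) (at p within Vn)"
  shows "D1 (Lf i j p) = D2 (Lf i j p)"
proof -
  obtain x \<xi> where px: "p = (x, \<xi>)" by force
  have x: "x \<noteq> 0" "\<xi> \<noteq> 0" "inner x \<xi> = 0" using p px by (auto simp: Vn_def)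
  define v where "v = (x $ i) *\<^sub>R axis j (1::real) - (x $ j) *\<^sub>R axis i 1"
  have Lf: "Lf i j p = (0, v)" by (simp add: Lf_def px v_def)
  have xv: "inner x v = 0" by (simp add: v_def inner_diff_right inner_axis)
  define \<gamma> where "\<gamma> t = (x, \<xi> + t *\<^sub>R v)" for t :: real
  define T where "T = {t::real. \<xi> + t *\<^sub>R v \<noteq> 0}"
  have "open T" unfolding T_def
    by (intro open_Collect_neq continuous_intros)
  moreover have "0 \<in> T" using x by (simp add: T_def)
  moreover have "\<gamma> ` T \<subseteq> Vn"
    using x xv by (auto simp: T_def \<gamma>_def Vn_def inner_add_right)
  moreover have "\<gamma> 0 = p" by (simp add: \<gamma>_def px)
  moreover have "(\<gamma> has_derivative (\<lambda>t. t *\<^sub>R (0, v))) (at 0)"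
    unfolding \<gamma>_def by (auto intro!: derivative_eq_intros)
  ultimately show ?thesis unfolding Lf using deriv_unique_curve[OF D1 D2] by blast
qed


lemma TS_unique:
  fixes q :: "'n::finite pt" and f :: "'n pt \<Rightarrow> real"
  assumes q: "q \<in> TS - S0" and D1: "(f has_derivative D1) (at q within (TS - S0))"
    and D2: "(f has_derivative D2) (at q within (TS - S0))"
    and qx: "q = (x, \<omega>)" and tb: "inner \<omega> b = 0" and ta: "inner a \<omega> + inner x b = 0"
  shows "D1 (a, b) = D2 (a, b)"
proof -
  have x: "x \<noteq> 0" "norm \<omega> = 1" "inner x \<omega> = 0" using q qx by (auto simp: TS_def S0_def)
  have ww: "inner \<omega> \<omega> = 1" using x(2) by (simp add: dot_square_norm)
  define \<beta> where "\<beta> = inner b b / 4"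
  have \<beta>: "\<beta> \<ge> 0" by (simp add: \<beta>_def)
  define w where "w t = (1 / (1 + t^2 * \<beta>)) *\<^sub>R ((1 - t^2 * \<beta>) *\<^sub>R \<omega> + t *\<^sub>R b)" for t :: real
  define y where "y t = (x + t *\<^sub>R a) - inner (x + t *\<^sub>R a) (w t) *\<^sub>R w t" for t :: real
  define \<gamma> where "\<gamma> t = (y t, w t)" for t
  define T where "T = {t::real. y t \<noteq> 0}"
  have pos: "1 + t^2 * \<beta> > 0" for t using \<beta> by (simp add: add_pos_nonneg)
  have wn: "inner (w t) (w t) = 1" for t
  proof -
    have "inner ((1 - t^2 * \<beta>) *\<^sub>R \<omega> + t *\<^sub>R b) ((1 - t^2 * \<beta>) *\<^sub>R \<omega> + t *\<^sub>R b)
        = (1 - t^2 * \<beta>)^2 + t^2 * inner b b"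
      using ww tb by (simp add: inner_add_left inner_add_right inner_commute power2_eq_square algebra_simps)
    also have "\<dots> = (1 + t^2 * \<beta>)^2" by (simp add: \<beta>_def power2_eq_square algebra_simps)
    finally show ?thesis using pos[of t] by (simp add: w_def power2_eq_square)
  qed
  have yw: "inner (y t) (w t) = 0" for t
    by (simp add: y_def inner_diff_left wn)
  have "continuous_on UNIV y"
    unfolding y_def w_def using pos by (intro continuous_intros) (auto simp: less_le)
  then have "open T" unfolding T_def
    by (intro open_Collect_neq) (auto intro: continuous_intros)
  moreover have w0: "w 0 = \<omega>" by (simp add: w_def)
  moreover have "y 0 = x" by (simp add: y_def w0 x(3))
  moreover have "0 \<in> T" using x \<open>y 0 = x\<close> by (simp add: T_def)
  moreover have "\<gamma> ` T \<subseteq> TS - S0"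
    using yw wn by (auto simp: T_def \<gamma>_def TS_def S0_def norm_eq_1)
  moreover have "\<gamma> 0 = q" by (simp add: \<gamma>_def qx w0 \<open>y 0 = x\<close>)
  moreover have "(\<gamma> has_derivative (\<lambda>t. t *\<^sub>R (a, b))) (at 0)"
  proof -
    have tb2: "inner x b = - inner a \<omega>" using ta by linarith
    have hw: "(w has_derivative (\<lambda>t. t *\<^sub>R b)) (at 0)"
      unfolding w_def
      apply (rule derivative_eq_intros refl | simp)+
      done
    show ?thesis unfolding \<gamma>_def y_def
      apply (rule derivative_eq_intros hw refl | simp)+
      using x(3) by (simp add: w0 tb2)
  qed
  ultimately show ?thesis using deriv_unique_curve[OF D1 D2] by blast
qed


lemma TS_Xi_unique:
  fixes q :: "'n::finite pt" and f :: "'n pt \<Rightarrow> real"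
  assumes q: "q \<in> TS - S0" and D1: "(f has_derivative D1) (at q within (TS - S0))"
    and D2: "(f has_derivative D2) (at q within (TS - S0))"
  shows "D1 (Xi j q) = D2 (Xi j q)"
proof -
  obtain x \<omega> where qx: "q = (x, \<omega>)" by force
  have x: "norm \<omega> = 1" "inner x \<omega> = 0" using q qx by (auto simp: TS_def S0_def)
  have ww: "inner \<omega> \<omega> = 1" using x(1) by (simp add: dot_square_norm)
  have xc: "inner \<omega> x = 0" using x(2) by (simp add: inner_commute)
  have Xi: "Xi j q = (- (x $ j) *\<^sub>R \<omega>, axis j 1 - (\<omega> $ j) *\<^sub>R \<omega>)" by (simp add: Xi_def qx)
  show ?thesis unfolding Xi
    by (rule TS_unique[OF q D1 D2 qx])
       (auto simp: inner_diff_right inner_diff_left inner_axis inner_axis' ww x(2) xc)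
qed

lemma sub_has_deriv:
  assumes "smooth_on_sub S g" "q \<in> S"
  shows "\<exists>U G. open U \<and> q \<in> U \<and> smooth_on_open U G \<and> (\<forall>y\<in>S \<inter> U. g y = G y)"
  using assms unfolding smooth_on_sub_def by blast

lemma local_has_deriv:
  assumes U: "open U" "q \<in> U" "smooth_on_open U G" "\<forall>y\<in>S \<inter> U. g y = G y" and q: "q \<in> S"
  shows "(g has_derivative frechet_derivative G (at q)) (at q within S)"
proof -
  have "(G has_derivative frechet_derivative G (at q)) (at q)"
    using smooth_diff[OF U(3,2)] frechet_derivative_works by blast
  then have h: "(G has_derivative frechet_derivative G (at q)) (at q within S)"
    using has_derivative_at_withinI by blast
  obtain e where e: "e > 0" "ball q e \<subseteq> U" using U(1,2) openE by blast
  show ?thesis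
  proof (rule has_derivative_transform_within[OF h e(1) q])
    fix y assume "y \<in> S" "dist y q < e"
    then have "y \<in> U" using e(2) by (auto simp: dist_commute)
    then show "G y = g y" using U(4) \<open>y \<in> S\<close> by auto
  qed
qed

lemma vf_TS:
  fixes g :: "'n::finite pt \<Rightarrow> real"
  assumes U: "open U" "q \<in> U" "smooth_on_open U G" "\<forall>y\<in>(TS - S0) \<inter> U. g y = G y"
    and q: "q \<in> TS - S0"
  shows "vf_act (TS - S0) (Xi j) g q = frechet_derivative G (at q) (Xi j q)"
proof -
  have h: "(g has_derivative frechet_derivative G (at q)) (at q within (TS - S0))"
    by (rule local_has_deriv[OF U q])
  then have "(g has_derivative frechet_derivative g (at q within (TS - S0))) (at q within (TS - S0))"
    using frechet_derivative_works differentiableI by blast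
  then show ?thesis unfolding vf_act_def using TS_Xi_unique[OF q _ h] by blast
qed

lemma smooth_cong:
  assumes "smooth_on_open U f" "\<forall>q\<in>U. f q = g q"
  shows "smooth_on_open U g"
  unfolding smooth_on_open_def
proof (intro conjI allI ballI)
  show U: "open U" using assms(1) smooth_open by blast
  fix vs p assume p: "p \<in> U"
  have "\<forall>y\<in>U. dderiv f vs y = dderiv g vs y" using dderiv_local[OF U assms(2)] by blast
  moreover have "dderiv f vs differentiable (at p)" using assms(1) p smooth_on_open_def by blast
  ultimately show "dderiv g vs differentiable (at p)" using diff_local[OF U p] by blast
qed

lemma smooth_fdX:
  fixes G :: "'a::euclidean_space \<Rightarrow> real"
  assumes G: "smooth_on_open U G" and X: "\<And>b. b \<in> Basis \<Longrightarrow> smooth_on_open U (\<lambda>q. inner (X q) b)"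
  shows "smooth_on_open U (\<lambda>q. frechet_derivative G (at q) (X q))"
proof -
  have U: "open U" using G smooth_open by blast
  have "smooth_on_open U (\<lambda>q. \<Sum>b\<in>Basis. inner (X q) b * dderiv G [b] q)"
    by (intro smooth_sum smooth_mult X smooth_dderiv[OF G] U finite_Basis)
  moreover have "\<forall>q\<in>U. (\<Sum>b\<in>Basis. inner (X q) b * dderiv G [b] q) = frechet_derivative G (at q) (X q)"
  proof
    fix q assume q: "q \<in> U"
    have lin: "linear (frechet_derivative G (at q))"
      using linear_frechet_derivative smooth_diff[OF G q] by blast
    have "frechet_derivative G (at q) (X q) = frechet_derivative G (at q) (\<Sum>b\<in>Basis. inner (X q) b *\<^sub>R b)"
      by (simp add: euclidean_representation)
    also have "\<dots> = (\<Sum>b\<in>Basis. inner (X q) b * frechet_derivative G (at q) b)"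
      by (simp add: linear_sum[OF lin] linear_scale[OF lin])
    finally show "(\<Sum>b\<in>Basis. inner (X q) b * dderiv G [b] q) = frechet_derivative G (at q) (X q)"
      by simp
  qed
  ultimately show ?thesis by (rule smooth_cong)
qed

lemma smooth_fstc: "open U \<Longrightarrow> smooth_on_open U (\<lambda>q::'n::finite pt. fst q $ j)"
  by (rule smooth_linear) (auto intro: bounded_linear_compose[OF bounded_linear_vec_nth] bounded_linear_fst)

lemma smooth_sndc: "open U \<Longrightarrow> smooth_on_open U (\<lambda>q::'n::finite pt. snd q $ j)"
  by (rule smooth_linear) (auto intro: bounded_linear_compose[OF bounded_linear_vec_nth] bounded_linear_snd)

lemma smooth_sndi: "open U \<Longrightarrow> smooth_on_open U (\<lambda>q::'n::finite pt. inner (snd q) c)"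
  by (rule smooth_linear) (auto intro: bounded_linear_compose[OF bounded_linear_inner_left] bounded_linear_snd)

lemma smooth_Xi:
  fixes U :: "'n::finite pt set"
  assumes U: "open U"
  shows "smooth_on_open U (\<lambda>q. inner (Xi j q) b)"
proof -
  obtain b1 b2 where b: "b = (b1, b2)" by force
  have "smooth_on_open U (\<lambda>q. - (fst q $ j) * inner (snd q) b1 + (inner (axis j 1) b2 - snd q $ j * inner (snd q) b2))"
    using U by (intro smooth_add smooth_mult smooth_minus smooth_cmult[of U _ "-1", simplified]
        smooth_fstc smooth_sndc smooth_sndi smooth_const)
  moreover have "\<forall>q\<in>U. - (fst q $ j) * inner (snd q) b1 + (inner (axis j 1) b2 - snd q $ j * inner (snd q) b2)
     = inner (Xi j q) b"
    by (auto simp: Xi_def b inner_Pair inner_diff_left split: prod.splits)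
  ultimately show ?thesis by (rule smooth_cong)
qed

lemma good_Eop:
  assumes g: "smooth_on_sub (TS - S0) (g :: 'n::finite pt \<Rightarrow> real)"
  shows "smooth_on_sub (TS - S0) (Eop c i j g)"
  unfolding smooth_on_sub_def
proof
  fix p :: "'n pt" assume p: "p \<in> TS - S0"
  obtain U G where UG: "open U" "p \<in> U" "smooth_on_open U G" "\<forall>y\<in>(TS - S0) \<inter> U. g y = G y"
    using sub_has_deriv[OF g p] by blast
  define H where "H q = fst q $ i * frechet_derivative G (at q) (Xi j q)
      - fst q $ j * frechet_derivative G (at q) (Xi i q)
      + c * (fst q $ i * snd q $ j - fst q $ j * snd q $ i) * G q" for q
  have "smooth_on_open U H"
    unfolding H_def using UG(1)
    by (intro smooth_add smooth_minus smooth_mult smooth_fstc smooth_sndc smooth_const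
        smooth_fdX[OF UG(3)] smooth_Xi UG(3))
  moreover have "\<forall>q\<in>(TS - S0) \<inter> U. Eop c i j g q = H q"
  proof
    fix q assume q: "q \<in> (TS - S0) \<inter> U"
    show "Eop c i j g q = H q"
      unfolding Eop_def H_def using vf_TS[OF UG(1) _ UG(3,4)] q UG(4) by auto
  qed
  ultimately show "\<exists>U H. open U \<and> p \<in> U \<and> smooth_on_open U H \<and> (\<forall>q\<in>(TS - S0) \<inter> U. Eop c i j g q = H q)"
    using UG(1,2) by blast
qed


definition Nm :: "'n::finite pt \<Rightarrow> 'n pt" where
  "Nm p = (fst p, (1 / norm (snd p)) *\<^sub>R snd p)"

definition hom :: "real \<Rightarrow> ('n::finite pt \<Rightarrow> real) \<Rightarrow> 'n pt \<Rightarrow> real" where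
  "hom c g = (\<lambda>p. norm (snd p) powr c * g (Nm p))"

lemma Nm_Vn: "p \<in> Vn \<Longrightarrow> Nm p \<in> TS - S0"
  by (auto simp: Vn_def TS_def S0_def Nm_def)

lemma hom_step:
  fixes g :: "'n::finite pt \<Rightarrow> real"
  assumes g: "smooth_on_sub (TS - S0) g" and p: "p \<in> Vn"
  shows "vf_act Vn (Lf i j) (hom c g) p = hom (c - 1) (Eop c i j g) p"
proof -
  obtain x \<xi> where px: "p = (x, \<xi>)" by force
  have x: "x \<noteq> 0" "\<xi> \<noteq> 0" "inner x \<xi> = 0" using p px by (auto simp: Vn_def)
  define r where "r = norm \<xi>"
  have r: "r > 0" using x by (simp add: r_def)
  define \<omega> where "\<omega> = (1 / r) *\<^sub>R \<xi>"
  define q where "q = (x, \<omega>)"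
  have q: "Nm p = q" by (simp add: Nm_def px q_def \<omega>_def r_def)
  have qS: "q \<in> TS - S0" using Nm_Vn[OF p] q by simp
  define Dg where "Dg = frechet_derivative g (at q within (TS - S0))"
  have hDg: "(g has_derivative Dg) (at q within (TS - S0))"
  proof -
    obtain U G where "open U" "q \<in> U" "smooth_on_open U G" "\<forall>y\<in>(TS - S0) \<inter> U. g y = G y"
      using sub_has_deriv[OF g qS] by blast
    then have "g differentiable (at q within (TS - S0))"
      using local_has_deriv[OF _ _ _ _ qS] differentiableI by blast
    then show ?thesis unfolding Dg_def using frechet_derivative_works by blast
  qed
  have linDg: "linear Dg" using hDg has_derivative_linear by blast
  define DN where "DN h = (fst h, (1 / r) *\<^sub>R snd h - (inner \<xi> (snd h) / r^3) *\<^sub>R \<xi>)" for h :: "'n pt"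
  have hn: "((\<lambda>p. norm (snd p)) has_derivative (\<lambda>h. inner (snd h) (sgn \<xi>))) (at p)"
  proof -
    have "(snd has_derivative snd) (at p)" by (rule bounded_linear_imp_has_derivative[OF bounded_linear_snd])
    moreover have "(norm has_derivative (\<lambda>h. inner h (sgn \<xi>))) (at (snd p))"
      using has_derivative_norm[OF x(2)] px by (simp add: gderiv_def)
    ultimately show ?thesis using has_derivative_compose by blast
  qed
  have hn': "((\<lambda>p. norm (snd p)) has_derivative (\<lambda>h. inner (snd h) (sgn \<xi>))) (at p within Vn)"
    using hn has_derivative_at_withinI by blast
  have rc: "r powr c = r * r powr (c - 1)"
    using powr_add[of r 1 "c - 1"] r by simp
  have hN: "(Nm has_derivative DN) (at p within Vn)"
    unfolding Nm_def
    apply (rule derivative_eq_intros hn' refl | simp add: px x)+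
    apply (rule ext)
    apply (simp add: DN_def r_def[symmetric] sgn_div_norm inner_commute power3_eq_cube)
    apply (simp add: field_simps)
    done
  have NV: "Nm ` Vn \<subseteq> TS - S0" using Nm_Vn by blast
  have hgN: "((\<lambda>p. g (Nm p)) has_derivative (\<lambda>h. Dg (DN h))) (at p within Vn)"
    using has_derivative_in_compose[OF hN has_derivative_subset[OF _ NV]] hDg q by simp
  have hpow: "((\<lambda>p. norm (snd p) powr c) has_derivative (\<lambda>h. c * r powr (c - 1) * inner (snd h) (sgn \<xi>))) (at p within Vn)"
  proof (rule has_derivative_eq_rhs)
    show "((\<lambda>p. norm (snd p) powr c) has_derivative (\<lambda>h. norm (snd p) powr c * (0 * ln (norm (snd p)) + inner (snd h) (sgn \<xi>) * c / norm (snd p)))) (at p within Vn)"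
      by (rule has_derivative_powr[OF hn' has_derivative_const]) (use r px r_def p in auto)
    show "(\<lambda>h. norm (snd p) powr c * (0 * ln (norm (snd p)) + inner (snd h) (sgn \<xi>) * c / norm (snd p)))
        = (\<lambda>h. c * r powr (c - 1) * inner (snd h) (sgn \<xi>))"
      using r by (auto simp: px r_def[symmetric] rc)
  qed
  have hH: "(hom c g has_derivative (\<lambda>h. g q * (c * r powr (c - 1) * inner (snd h) (sgn \<xi>)) + r powr c * Dg (DN h))) (at p within Vn)"
    unfolding hom_def
    using has_derivative_mult[OF hpow hgN] q px r_def by (simp add: algebra_simps)
  have "vf_act Vn (Lf i j) (hom c g) p = g q * (c * r powr (c - 1) * inner (snd (Lf i j p)) (sgn \<xi>)) + r powr c * Dg (DN (Lf i j p))"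
  proof -
    have "(hom c g has_derivative frechet_derivative (hom c g) (at p within Vn)) (at p within Vn)"
      using hH frechet_derivative_works differentiableI by blast
    then show ?thesis unfolding vf_act_def using Vn_unique[OF p _ hH] by simp
  qed
  also have "\<dots> = hom (c - 1) (Eop c i j g) p"
  proof -
    define v where "v = (x $ i) *\<^sub>R axis j (1::real) - (x $ j) *\<^sub>R axis i 1"
    have Lf: "Lf i j p = (0, v)" by (simp add: Lf_def px v_def)
    have iv: "inner v \<xi> = x$i * \<xi>$j - x$j * \<xi>$i" by (simp add: v_def inner_diff_left inner_axis')
    have sg: "inner v (sgn \<xi>) = (x$i * \<xi>$j - x$j * \<xi>$i) / r"
      by (simp add: sgn_div_norm r_def[symmetric] iv divide_inverse)
    have fq: "fst q = x" by (simp add: q_def)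
    have sq: "snd q $ k = \<xi> $ k / r" for k by (simp add: q_def \<omega>_def)
    have aj: "inner (axis j (1::real)) \<xi> = \<xi>$j" "inner (axis i (1::real)) \<xi> = \<xi>$i"
      by (simp_all add: inner_axis')
    note ai = aj(2)
    have kv: "DN (0, v) = (1/r) *\<^sub>R (x$i *\<^sub>R Xi j q - x$j *\<^sub>R Xi i q)"
      using r unfolding DN_def Xi_def q_def \<omega>_def v_def
      by (simp add: vec_eq_iff aj(1)[unfolded axis_def] ai[unfolded axis_def] axis_def inner_diff_right inner_commute[of \<xi>] iv[unfolded v_def] field_simps power3_eq_cube)
    have Dk: "Dg (DN (0,v)) = (1/r) * (x$i * Dg (Xi j q) - x$j * Dg (Xi i q))"
      unfolding kv using linDg by (simp add: linear_scale linear_diff diff_divide_distrib)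
    have E: "Eop c i j g q = x$i * Dg (Xi j q) - x$j * Dg (Xi i q) + c * (x$i * (\<xi>$j / r) - x$j * (\<xi>$i / r)) * g q"
      by (simp add: Eop_def vf_act_def Dg_def[symmetric] fq sq)
    have H: "hom (c - 1) F p = r powr (c - 1) * F q" for F
    proof -
      have "norm (snd p) = r" by (simp add: px r_def)
      then show ?thesis unfolding hom_def by (simp add: q)
    qed
    show ?thesis unfolding Lf H E using r
      by (simp add: sg Dk rc field_simps)
  qed
  finally show ?thesis .
qed


lemma vf_cong:
  assumes "p \<in> S" "\<forall>y\<in>S. f y = f' y"
  shows "vf_act S X f p = vf_act S X f' p"
proof -
  have "\<And>D. (f has_derivative D) (at p within S) = (f' has_derivative D) (at p within S)"
    using has_derivative_transform[OF assms(1)] assms(2) by metis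
  then show ?thesis unfolding vf_act_def frechet_derivative_def by simp
qed

theorem lemma4p2:
  fixes m :: nat and \<phi> :: "'n::finite pt \<Rightarrow> real"
  assumes smooth: "smooth_on_sub (TS - S0) \<phi>"
    and hyp: "\<And>I J :: nat \<Rightarrow> 'n. \<forall>p \<in> TS - S0.
         foldr (\<lambda>k g. Eop (real m - real k + 1) (I k) (J k) g) (rev [1..<m+2]) \<phi> p = 0"
  shows "\<And>I J :: nat \<Rightarrow> 'n. \<forall>p \<in> Vn.
         foldr (\<lambda>k g. vf_act Vn (Lf (I k) (J k)) g) [1..<m+2]
           (\<lambda>(x, \<xi>). norm \<xi> ^ m * \<phi> (x, (1 / norm \<xi>) *\<^sub>R \<xi>)) p = 0"
proof -
  fix I J :: "nat \<Rightarrow> 'n"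
  define I' where "I' k = I (m + 2 - k)" for k
  define J' where "J' k = J (m + 2 - k)" for k
  define Es where "Es = (\<lambda>k g. Eop (real m - real k + 1) (I' k) (J' k) g)"
  define G where "G d = foldr Es (rev [1..<d+1]) \<phi>" for d
  define Ls where "Ls = (\<lambda>k g. vf_act Vn (Lf (I k) (J k)) g)"
  define \<psi> where "\<psi> = (\<lambda>(x, \<xi>). norm \<xi> ^ m * \<phi> (x, (1 / norm (\<xi>::real^'n)) *\<^sub>R \<xi>))"
  have claim: "smooth_on_sub (TS - S0) (G d) \<and>
      (\<forall>p\<in>Vn. foldr Ls [m + 2 - d..<m + 2] \<psi> p = hom (real m - real d) (G d) p)"
    if "d \<le> m + 1" for d
    using that
  proof (induction d)
    case 0
    have "\<forall>p\<in>Vn. \<psi> p = hom (real m) \<phi> p"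
      by (auto simp: Vn_def \<psi>_def hom_def Nm_def powr_realpow)
    then show ?case using smooth by (simp add: G_def)
  next
    case (Suc d)
    have d: "d \<le> m" using Suc.prems by simp
    have IH: "smooth_on_sub (TS - S0) (G d)"
      "\<forall>p\<in>Vn. foldr Ls [m + 2 - d..<m + 2] \<psi> p = hom (real m - real d) (G d) p"
      using Suc.IH d by auto
    have GS: "G (Suc d) = Eop (real m - real d) (I (m + 1 - d)) (J (m + 1 - d)) (G d)"
    proof -
      have idx: "m + 2 - Suc d = m + 1 - d" using d by simp
      have "G (Suc d) = Es (Suc d) (G d)" by (simp add: G_def)
      also have "\<dots> = Eop (real m - real d) (I (m + 1 - d)) (J (m + 1 - d)) (G d)"
        by (simp only: Es_def I'_def J'_def idx) simp
      finally show ?thesis .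
    qed
    have LS: "[m + 2 - Suc d..<m + 2] = (m + 1 - d) # [m + 2 - d..<m + 2]"
    proof -
      have e1: "m + 2 - Suc d = m + 1 - d" "Suc (m + 1 - d) = m + 2 - d" using d by auto
      have "[m + 1 - d..<m + 2] = (m + 1 - d) # [Suc (m + 1 - d)..<m + 2]"
        by (rule upt_conv_Cons) simp
      then show ?thesis by (simp only: e1)
    qed
    have "\<forall>p\<in>Vn. foldr Ls [m + 2 - Suc d..<m + 2] \<psi> p = hom (real m - real (Suc d)) (G (Suc d)) p"
    proof
      fix p :: "'n pt" assume p: "p \<in> Vn"
      have "foldr Ls [m + 2 - Suc d..<m + 2] \<psi> p
          = vf_act Vn (Lf (I (m + 1 - d)) (J (m + 1 - d))) (foldr Ls [m + 2 - d..<m + 2] \<psi>) p"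
        unfolding LS foldr.simps o_def Ls_def by (rule refl)
      also have "\<dots> = vf_act Vn (Lf (I (m + 1 - d)) (J (m + 1 - d))) (hom (real m - real d) (G d)) p"
        by (rule vf_cong[OF p IH(2)])
      also have "\<dots> = hom (real m - real d - 1) (G (Suc d)) p"
        unfolding GS by (rule hom_step[OF IH(1) p])
      finally show "foldr Ls [m + 2 - Suc d..<m + 2] \<psi> p = hom (real m - real (Suc d)) (G (Suc d)) p"
        by (simp add: algebra_simps)
    qed
    then show ?case using good_Eop[OF IH(1)] GS by simp
  qed
  from claim[of "m + 1"] have C: "\<forall>p\<in>Vn. foldr Ls [1..<m + 2] \<psi> p = hom (real m - real (m + 1)) (G (m + 1)) p"
    by simp
  have Z: "\<forall>q\<in>TS - S0. G (m + 1) q = 0"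
    using hyp[of I' J'] unfolding G_def Es_def by simp
  show "\<forall>p \<in> Vn.
         foldr (\<lambda>k g. vf_act Vn (Lf (I k) (J k)) g) [1..<m+2]
           (\<lambda>(x, \<xi>). norm \<xi> ^ m * \<phi> (x, (1 / norm \<xi>) *\<^sub>R \<xi>)) p = 0"
  proof
    fix p :: "'n pt" assume p: "p \<in> Vn"
    have "foldr Ls [1..<m + 2] \<psi> p = 0"
      using C p Z Nm_Vn[OF p] by (simp add: hom_def)
    then show "foldr (\<lambda>k g. vf_act Vn (Lf (I k) (J k)) g) [1..<m+2]
           (\<lambda>(x, \<xi>). norm \<xi> ^ m * \<phi> (x, (1 / norm \<xi>) *\<^sub>R \<xi>)) p = 0"
      by (simp add: Ls_def \<psi>_def)
  qed
qed

end
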